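(* Let $X_\Sigma$ be a projective toric variety. For any $x\in Z(\Sigma)$ and any $D\in\mathrm{Amp}(X_\Sigma)_{\mathbf R}$, there is a unique vector $\lambda^D_x\in\Lambda^D_x$ that is $\chi_D$-adapted to $x$, and $M^D(x)=-\|\lambda^D_x\|$.
   Context: $\Sigma$ complete fan, rays $\Sigma(1)$, generators $u_\rho$, divisors $D_\rho$; primitive collections $C\subset\Sigma(1)$ (not contained in $\sigma(1)$ for any cone $\sigma$, every proper subset is); $Z(\Sigma)=\bigcup_CV(x_\rho:\rho\in C)\subset\mathbf C^{\Sigma(1)}$. $G=\mathrm{Hom}(\mathrm{Cl}(X_\Sigma),\mathbf C^\times)$, $\Gamma(G)=\{b\in\mathbf Z^{\Sigma(1)}:\sum b_\rho u_\rho=0\}$, $\langle\chi_D,b\rangle=\sum a_\rho b_\rho$ for $D=\sum a_\rho D_\rho$, extended $\mathbf R$-linearly; $\Gamma(G)_{\mathbf R}\subset\mathbf R^{\Sigma(1)}$ with restricted standard inner product and norm; $\chi_D^*\in\Gamma(G)_{\mathbf R}$ defined by $(\chi_D^*,v)=\langle\chi_D,v\rangle$. $\mathrm{Amp}(X_\Sigma)_{\mathbf R}$ is the ample cone in $\mathrm{Pic}(X_\Sigma)_{\mathbf R}$. For $x\in\mathbf C^{\Sigma(1)}$, $S_x=\{\rho:x_\rho\ne0\}$, $\sigma_x=\{v\in\Gamma(G)_{\mathbf R}:v_\rho\ge0\ \forall\rho\in S_x\}$; for $Z\subset\Sigma(1)$, $W_Z=\{v\in\Gamma(G)_{\mathbf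 R}:v_\rho=0\ \forall\rho\in Z\}$ and $\mathrm{Proj}_{W_Z}$ is orthogonal projection; $\Lambda^D_x=\{-\mathrm{Proj}_{W_Z}\chi_D^*:Z\subset S_x,\ -\mathrm{Proj}_{W_Z}\chi_D^*\in\sigma_x\}$. $M^D(x)=\inf_{\lambda\in\sigma_x\setminus\{0\}}\langle\chi_D,\lambda\rangle/\|\lambda\|$, and $\lambda\in\Gamma(G)_{\mathbf R}$ is $\chi_D$-adapted to $x$ if $\langle\chi_D,\lambda\rangle/\|\lambda\|=M^D(x)$. *)

theory Defs
  imports "HOL-Analysis.Analysis"
begin

definition lattice_pt :: "real^'n \<Rightarrow> bool" where
  "lattice_pt v \<longleftrightarrow> (\<forall>i. v $ i \<in> \<int>)"

definition gen_cone :: "(real^'n) set \<Rightarrow> (real^'n) set" where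
  "gen_cone S = {(\<Sum>s\<in>S. c s *\<^sub>R s) | c. \<forall>s\<in>S. c s \<ge> 0}"

definition rational_polyhedral_cone :: "(real^'n) set \<Rightarrow> bool" where
  "rational_polyhedral_cone C \<longleftrightarrow>
     (\<exists>S. finite S \<and> (\<forall>s\<in>S. lattice_pt s) \<and> C = gen_cone S)"

definition strongly_convex :: "(real^'n) set \<Rightarrow> bool" where
  "strongly_convex C \<longleftrightarrow> C \<inter> uminus ` C = {0}"

definition is_fan :: "(real^'n) set set \<Rightarrow> bool" where
  "is_fan \<Sigma> \<longleftrightarrow> finite \<Sigma> \<and>
     (\<forall>\<sigma>\<in>\<Sigma>. rational_polyhedral_cone \<sigma> \<and> strongly_convex \<sigma>) \<and>
     (\<forall>\<sigma>\<in>\<Sigma>. \<forall>\<tau>. \<tau> face_of \<sigma> \<and> \<tau> \<noteq> {} \<longrightarrow> \<tau> \<in> \<Sigma>) \<and>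
     (\<forall>\<sigma>\<in>\<Sigma>. \<forall>\<tau>\<in>\<Sigma>. (\<sigma> \<inter> \<tau>) face_of \<sigma> \<and> (\<sigma> \<inter> \<tau>) face_of \<tau>)"

definition complete_fan :: "(real^'n) set set \<Rightarrow> bool" where
  "complete_fan \<Sigma> \<longleftrightarrow> is_fan \<Sigma> \<and> \<Union>\<Sigma> = UNIV"

definition rays :: "(real^'n) set set \<Rightarrow> (real^'n) set set" where
  "rays \<Sigma> = {\<rho>\<in>\<Sigma>. aff_dim \<rho> = 1}"

definition ray_gen :: "(real^'n) set \<Rightarrow> real^'n" where
  "ray_gen \<rho> = (THE v. v \<in> \<rho> \<and> v \<noteq> 0 \<and> lattice_pt v \<and>
      (\<forall>w. w \<in> \<rho> \<and> w \<noteq> 0 \<and> lattice_pt w \<longrightarrow> (\<exists>k::nat. w = real k *\<^sub>R v)))"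

definition cone_rays :: "(real^'n) set set \<Rightarrow> (real^'n) set \<Rightarrow> (real^'n) set set" where
  "cone_rays \<Sigma> \<sigma> = {\<rho>\<in>rays \<Sigma>. \<rho> \<subseteq> \<sigma>}"

definition primitive_collection :: "(real^'n) set set \<Rightarrow> (real^'n) set set \<Rightarrow> bool" where
  "primitive_collection \<Sigma> C \<longleftrightarrow> C \<subseteq> rays \<Sigma> \<and>
     (\<forall>\<sigma>\<in>\<Sigma>. \<not> C \<subseteq> cone_rays \<Sigma> \<sigma>) \<and>
     (\<forall>C'. C' \<subset> C \<longrightarrow> (\<exists>\<sigma>\<in>\<Sigma>. C' \<subseteq> cone_rays \<Sigma> \<sigma>))"

text \<open>Points of C^{\<Sigma>(1)} are functions on rays (values off \<Sigma>(1) are irrelevant).\<close>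
definition unstable_locus :: "(real^'n) set set \<Rightarrow> ((real^'n) set \<Rightarrow> complex) set" where
  "unstable_locus \<Sigma> = {x. \<exists>C. primitive_collection \<Sigma> C \<and> (\<forall>\<rho>\<in>C. x \<rho> = 0)}"

definition maximal_cone :: "(real^'n) set set \<Rightarrow> (real^'n) set \<Rightarrow> bool" where
  "maximal_cone \<Sigma> \<sigma> \<longleftrightarrow> \<sigma> \<in> \<Sigma> \<and> \<not> (\<exists>\<tau>\<in>\<Sigma>. \<sigma> \<subset> \<tau>)"

text \<open>D = \<Sum> a_\<rho> D_\<rho> (real coefficients) is ample iff its support function is
  strictly convex: for each maximal cone \<sigma> there is m_\<sigma> in M_R with
  <m_\<sigma>,u_\<rho>> = -a_\<rho> for \<rho> in \<sigma>(1) and <m_\<sigma>,u_\<rho>> > -a_\<rho> otherwise.\<close>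
definition ample_divisor :: "(real^'n) set set \<Rightarrow> ((real^'n) set \<Rightarrow> real) \<Rightarrow> bool" where
  "ample_divisor \<Sigma> a \<longleftrightarrow>
     (\<forall>\<sigma>. maximal_cone \<Sigma> \<sigma> \<longrightarrow> (\<exists>m::real^'n. \<forall>\<rho>\<in>rays \<Sigma>.
        (\<rho> \<subseteq> \<sigma> \<longrightarrow> m \<bullet> ray_gen \<rho> = - a \<rho>) \<and>
        (\<not> \<rho> \<subseteq> \<sigma> \<longrightarrow> m \<bullet> ray_gen \<rho> > - a \<rho>)))"

definition projective_fan :: "(real^'n) set set \<Rightarrow> bool" where
  "projective_fan \<Sigma> \<longleftrightarrow> complete_fan \<Sigma> \<and> (\<exists>a. ample_divisor \<Sigma> a)"

definition Gamma_R :: "(real^'n) set set \<Rightarrow> ((real^'n) set \<Rightarrow> real) set" where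
  "Gamma_R \<Sigma> = {v. (\<forall>\<rho>. \<rho> \<notin> rays \<Sigma> \<longrightarrow> v \<rho> = 0) \<and>
                     (\<Sum>\<rho>\<in>rays \<Sigma>. v \<rho> *\<^sub>R ray_gen \<rho>) = 0}"

definition ip :: "(real^'n) set set \<Rightarrow> ((real^'n) set \<Rightarrow> real) \<Rightarrow> ((real^'n) set \<Rightarrow> real) \<Rightarrow> real" where
  "ip \<Sigma> v w = (\<Sum>\<rho>\<in>rays \<Sigma>. v \<rho> * w \<rho>)"

definition nrm :: "(real^'n) set set \<Rightarrow> ((real^'n) set \<Rightarrow> real) \<Rightarrow> real" where
  "nrm \<Sigma> v = sqrt (ip \<Sigma> v v)"

definition chi_pair :: "(real^'n) set set \<Rightarrow> ((real^'n) set \<Rightarrow> real) \<Rightarrow> ((real^'n) set \<Rightarrow> real) \<Rightarrow> real" where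
  "chi_pair \<Sigma> a b = (\<Sum>\<rho>\<in>rays \<Sigma>. a \<rho> * b \<rho>)"

definition chi_star :: "(real^'n) set set \<Rightarrow> ((real^'n) set \<Rightarrow> real) \<Rightarrow> ((real^'n) set \<Rightarrow> real)" where
  "chi_star \<Sigma> a = (THE c. c \<in> Gamma_R \<Sigma> \<and> (\<forall>v\<in>Gamma_R \<Sigma>. ip \<Sigma> c v = chi_pair \<Sigma> a v))"

definition S_supp :: "(real^'n) set set \<Rightarrow> ((real^'n) set \<Rightarrow> complex) \<Rightarrow> (real^'n) set set" where
  "S_supp \<Sigma> x = {\<rho>\<in>rays \<Sigma>. x \<rho> \<noteq> 0}"

definition sigma_x :: "(real^'n) set set \<Rightarrow> ((real^'n) set \<Rightarrow> complex) \<Rightarrow> ((real^'n) set \<Rightarrow> real) set" where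
  "sigma_x \<Sigma> x = {v\<in>Gamma_R \<Sigma>. \<forall>\<rho>\<in>S_supp \<Sigma> x. v \<rho> \<ge> 0}"

definition W_sub :: "(real^'n) set set \<Rightarrow> (real^'n) set set \<Rightarrow> ((real^'n) set \<Rightarrow> real) set" where
  "W_sub \<Sigma> Z = {v\<in>Gamma_R \<Sigma>. \<forall>\<rho>\<in>Z. v \<rho> = 0}"

definition proj :: "(real^'n) set set \<Rightarrow> ((real^'n) set \<Rightarrow> real) set \<Rightarrow> ((real^'n) set \<Rightarrow> real) \<Rightarrow> ((real^'n) set \<Rightarrow> real)" where
  "proj \<Sigma> W v = (THE w. w \<in> W \<and> (\<forall>u\<in>W. ip \<Sigma> (\<lambda>\<rho>. v \<rho> - w \<rho>) u = 0))"

definition Lambda :: "(real^'n) set set \<Rightarrow> ((real^'n) set \<Rightarrow> real) \<Rightarrow> ((real^'n) set \<Rightarrow> complex) \<Rightarrow> ((real^'n) set \<Rightarrow> real) set" where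
  "Lambda \<Sigma> a x = {(\<lambda>\<rho>. - proj \<Sigma> (W_sub \<Sigma> Z) (chi_star \<Sigma> a) \<rho>) | Z.
      Z \<subseteq> S_supp \<Sigma> x \<and> (\<lambda>\<rho>. - proj \<Sigma> (W_sub \<Sigma> Z) (chi_star \<Sigma> a) \<rho>) \<in> sigma_x \<Sigma> x}"

definition M_fun :: "(real^'n) set set \<Rightarrow> ((real^'n) set \<Rightarrow> real) \<Rightarrow> ((real^'n) set \<Rightarrow> complex) \<Rightarrow> real" where
  "M_fun \<Sigma> a x = Inf {chi_pair \<Sigma> a l / nrm \<Sigma> l | l. l \<in> sigma_x \<Sigma> x \<and> l \<noteq> (\<lambda>_. 0)}"

definition adapted :: "(real^'n) set set \<Rightarrow> ((real^'n) set \<Rightarrow> real) \<Rightarrow> ((real^'n) set \<Rightarrow> complex) \<Rightarrow> ((real^'n) set \<Rightarrow> real) \<Rightarrow> bool" where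
  "adapted \<Sigma> a x l \<longleftrightarrow> l \<in> Gamma_R \<Sigma> \<and> l \<noteq> (\<lambda>_. 0) \<and> chi_pair \<Sigma> a l / nrm \<Sigma> l = M_fun \<Sigma> a x"

end

theory Submission
  imports Defs
begin

lemma ip_sym: "ip S f g = ip S g f"
  unfolding ip_def by (simp add: mult.commute)

lemma ip_diff_left: "ip S (\<lambda>r. f r - g r) u = ip S f u - ip S g u"
  unfolding ip_def by (simp add: left_diff_distrib sum_subtractf)

lemma ip_add_left: "ip S (\<lambda>r. f r + g r) u = ip S f u + ip S g u"
  unfolding ip_def by (simp add: distrib_right sum.distrib)

lemma ip_scale_left: "ip S (\<lambda>r. k * f r) u = k * ip S f u"
  unfolding ip_def by (simp add: sum_distrib_left mult.assoc)

lemma ip_sum_left: "ip S (\<lambda>r. \<Sum>h\<in>G. c h * h r) u = (\<Sum>h\<in>G. c h * ip S h u)"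
  unfolding ip_def by (simp add: sum_distrib_left sum_distrib_right mult.assoc sum.swap[of _ G])

lemma ip_self_nonneg: "ip S f f \<ge> 0"
  unfolding ip_def by (simp add: sum_nonneg)

lemma ip_self_zero: assumes "finite (rays S)" "ip S f f = 0" "r \<in> rays S" shows "f r = 0"
proof -
  have "\<forall>r\<in>rays S. f r * f r = 0"
    using assms(2) unfolding ip_def by (subst sum_nonneg_eq_0_iff[symmetric]) (auto simp: assms(1))
  then show ?thesis using assms(3) by auto
qed

lemma ip_cong: assumes "\<And>r. r \<in> rays S \<Longrightarrow> f r = f' r" shows "ip S f u = ip S f' u"
  unfolding ip_def using assms by (intro sum.cong) auto

lemma gram_schmidt:
  assumes "finite (rays S)" "finite G"
  shows "\<exists>c. \<forall>g\<in>G. ip S (\<lambda>r. y r - (\<Sum>h\<in>G. c h * h r)) g = 0"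
  using assms(2)
proof (induction G arbitrary: y rule: finite_induct)
  case empty then show ?case by simp
next
  case (insert b G)
  obtain c where c: "\<forall>g\<in>G. ip S (\<lambda>r. y r - (\<Sum>h\<in>G. c h * h r)) g = 0" using insert.IH by blast
  obtain d where d: "\<forall>g\<in>G. ip S (\<lambda>r. b r - (\<Sum>h\<in>G. d h * h r)) g = 0" using insert.IH by blast
  define e where "e = (\<lambda>r. b r - (\<Sum>h\<in>G. d h * h r))"
  define z where "z = (\<lambda>r. y r - (\<Sum>h\<in>G. c h * h r))"
  have eG: "\<forall>g\<in>G. ip S e g = 0" using d e_def by simp
  have zG: "\<forall>g\<in>G. ip S z g = 0" using c z_def by simp
  have bdec: "b = (\<lambda>r. e r + (\<Sum>h\<in>G. d h * h r))" unfolding e_def by simp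
  have zsum: "ip S z (\<lambda>r. \<Sum>h\<in>G. d h * h r) = 0"
    using zG by (simp add: ip_sym[of S z] ip_sum_left)
  show ?case
  proof (cases "ip S e e = 0")
    case True
    have e0: "\<And>r. r \<in> rays S \<Longrightarrow> e r = 0" using ip_self_zero[OF assms(1) True] .
    have "ip S z b = ip S z (\<lambda>r. \<Sum>h\<in>G. d h * h r)"
      by (subst ip_sym, subst (2) ip_sym, rule ip_cong) (simp add: bdec e0)
    hence zb: "ip S z b = 0" using zsum by simp
    let ?c = "c(b := 0)"
    have eqs0: "(\<Sum>h\<in>insert b G. ?c h * h r) = (\<Sum>h\<in>G. c h * h r)" for r
      using insert.hyps by (simp add: sum.insert) (intro sum.cong, auto)
    have eqs: "(\<lambda>r. y r - (\<Sum>h\<in>insert b G. ?c h * h r)) = z"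
      unfolding z_def by (rule ext) (simp only: eqs0)
    show ?thesis
      by (rule exI[of _ ?c]) (use zG zb in \<open>simp only: eqs, auto\<close>)
  next
    case False
    define k where "k = ip S z e / ip S e e"
    let ?c = "\<lambda>h. if h = b then k else c h - k * d h"
    have eqs: "(\<lambda>r. y r - (\<Sum>h\<in>insert b G. ?c h * h r)) = (\<lambda>r. z r - k * e r)"
    proof
      fix r
      have "(\<Sum>h\<in>insert b G. ?c h * h r) = k * b r + (\<Sum>h\<in>G. (c h - k * d h) * h r)"
        using insert.hyps by (simp add: sum.insert) (intro sum.cong, auto)
      also have "\<dots> = (\<Sum>h\<in>G. c h * h r) + k * e r"
        unfolding e_def by (simp add: left_diff_distrib sum_subtractf right_diff_distrib sum_distrib_left mult.assoc)
      finally show "y r - (\<Sum>h\<in>insert b G. ?c h * h r) = z r - k * e r" unfolding z_def by simp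
    qed
    have zk_e: "ip S (\<lambda>r. z r - k * e r) e = 0"
      using False by (simp only: ip_diff_left ip_scale_left k_def) simp
    have zk_G: "\<forall>g\<in>G. ip S (\<lambda>r. z r - k * e r) g = 0"
      using zG eG by (simp add: ip_diff_left ip_scale_left)
    have zk_sum: "ip S (\<lambda>r. z r - k * e r) (\<lambda>r. \<Sum>h\<in>G. d h * h r) = 0"
      using zk_G by (simp add: ip_sym[of S "\<lambda>r. z r - k * e r"] ip_sum_left)
    have zk_b: "ip S (\<lambda>r. z r - k * e r) b = 0"
      using zk_e zk_sum by (subst bdec) (simp add: ip_sym[of S "\<lambda>r. z r - k * e r"] ip_add_left)
    show ?thesis
      by (rule exI[of _ ?c]) (use zk_G zk_b in \<open>simp only: eqs, auto\<close>)
  qed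
qed

lemma Gamma_lin:
  assumes "f \<in> Gamma_R S" "g \<in> Gamma_R S"
  shows "(\<lambda>r. \<alpha> * f r + \<beta> * g r) \<in> Gamma_R S"
proof -
  have "(\<Sum>r\<in>rays S. (\<alpha> * f r + \<beta> * g r) *\<^sub>R ray_gen r)
      = \<alpha> *\<^sub>R (\<Sum>r\<in>rays S. f r *\<^sub>R ray_gen r) + \<beta> *\<^sub>R (\<Sum>r\<in>rays S. g r *\<^sub>R ray_gen r)"
    by (simp add: scaleR_add_left sum.distrib scaleR_sum_right)
  then show ?thesis using assms unfolding Gamma_R_def by auto
qed

lemma W_lin:
  assumes "f \<in> W_sub S Z" "g \<in> W_sub S Z"
  shows "(\<lambda>r. \<alpha> * f r + \<beta> * g r) \<in> W_sub S Z"
  using assms Gamma_lin unfolding W_sub_def by auto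

lemma W_diff:
  assumes "f \<in> W_sub S Z" "g \<in> W_sub S Z"
  shows "(\<lambda>r. f r - g r) \<in> W_sub S Z"
  using W_lin[OF assms, of 1 "-1"] by simp

lemma W_Gamma: "W_sub S Z \<subseteq> Gamma_R S" unfolding W_sub_def by auto

lemma Gamma_supp: "f \<in> Gamma_R S \<Longrightarrow> r \<notin> rays S \<Longrightarrow> f r = 0"
  unfolding Gamma_R_def by auto

lemma W_char:
  fixes S :: "(real^'n) set set"
  assumes "finite (rays S)" "Z \<subseteq> rays S" "\<forall>r. r \<notin> rays S \<longrightarrow> v r = 0"
  defines "G \<equiv> (\<lambda>z. \<lambda>r. if r = z then 1 else 0) ` Z \<union>
               range (\<lambda>i. \<lambda>r. if r \<in> rays S then ray_gen r $ i else (0::real))"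
  shows "v \<in> W_sub S Z \<longleftrightarrow> (\<forall>g\<in>G. ip S v g = 0)"
proof -
  have e1: "ip S v (\<lambda>r. if r = z then 1 else 0) = v z" if "z \<in> Z" for z
    using that assms(1,2) unfolding ip_def by (auto simp: if_distrib cong: if_cong)
  have e2: "ip S v (\<lambda>r. if r \<in> rays S then ray_gen r $ i else 0) = (\<Sum>r\<in>rays S. v r *\<^sub>R ray_gen r) $ i" for i
    unfolding ip_def by (simp add: sum_component)
  have "v \<in> W_sub S Z \<longleftrightarrow> (\<forall>z\<in>Z. v z = 0) \<and> (\<forall>i. (\<Sum>r\<in>rays S. v r *\<^sub>R ray_gen r) $ i = 0)"
    using assms(3) unfolding W_sub_def Gamma_R_def by (auto simp: vec_eq_iff)
  also have "\<dots> \<longleftrightarrow> (\<forall>g\<in>G. ip S v g = 0)"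
    unfolding G_def using e1 e2 by auto
  finally show ?thesis .
qed

lemma proj_exists:
  fixes S :: "(real^'n) set set"
  assumes "finite (rays S)" "Z \<subseteq> rays S"
  shows "\<exists>p\<in>W_sub S Z. \<forall>u\<in>W_sub S Z. ip S (\<lambda>r. y r - p r) u = 0"
proof -
  define G where "G \<equiv> (\<lambda>z. \<lambda>r. if r = z then 1 else 0) ` Z \<union>
               range (\<lambda>i. \<lambda>r. if r \<in> rays S then ray_gen r $ i else (0::real))"
  have fZ: "finite Z" using assms finite_subset by blast
  have fG: "finite G" unfolding G_def using fZ by simp
  obtain c where c: "\<forall>g\<in>G. ip S (\<lambda>r. y r - (\<Sum>h\<in>G. c h * h r)) g = 0"
    using gram_schmidt[OF assms(1) fG] by blast
  define p where "p = (\<lambda>r. if r \<in> rays S then y r - (\<Sum>h\<in>G. c h * h r) else 0)"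
  have pG: "\<forall>g\<in>G. ip S p g = 0"
  proof
    fix g assume "g \<in> G"
    have "ip S p g = ip S (\<lambda>r. y r - (\<Sum>h\<in>G. c h * h r)) g"
      by (rule ip_cong) (simp add: p_def)
    then show "ip S p g = 0" using c \<open>g \<in> G\<close> by simp
  qed
  have pW: "p \<in> W_sub S Z"
    using W_char[OF assms, of p] pG unfolding G_def p_def by auto
  have "\<forall>u\<in>W_sub S Z. ip S (\<lambda>r. y r - p r) u = 0"
  proof
    fix u assume u: "u \<in> W_sub S Z"
    have uG: "\<forall>g\<in>G. ip S u g = 0"
      using W_char[OF assms, of u] u W_Gamma Gamma_supp unfolding G_def by blast
    have "ip S (\<lambda>r. y r - p r) u = ip S (\<lambda>r. \<Sum>h\<in>G. c h * h r) u"
      by (rule ip_cong) (simp add: p_def)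
    also have "\<dots> = 0" using uG by (simp add: ip_sum_left ip_sym[of S _ u])
    finally show "ip S (\<lambda>r. y r - p r) u = 0" .
  qed
  then show ?thesis using pW by blast
qed

lemma fun_eq_on_rays:
  assumes "\<forall>r. r \<notin> rays S \<longrightarrow> f r = 0" "\<forall>r. r \<notin> rays S \<longrightarrow> g r = 0"
    "\<And>r. r \<in> rays S \<Longrightarrow> f r = g r"
  shows "f = g"
  using assms by (intro ext) metis

lemma proj_unique:
  assumes "finite (rays S)" "p \<in> W_sub S Z" "q \<in> W_sub S Z"
    "\<forall>u\<in>W_sub S Z. ip S (\<lambda>r. y r - p r) u = 0"
    "\<forall>u\<in>W_sub S Z. ip S (\<lambda>r. y r - q r) u = 0"
  shows "p = q"
proof -
  let ?d = "\<lambda>r. p r - q r"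
  have dW: "?d \<in> W_sub S Z" using W_diff assms(2,3) .
  have "ip S ?d ?d = ip S (\<lambda>r. y r - q r) ?d - ip S (\<lambda>r. y r - p r) ?d"
    by (simp add: ip_diff_left[symmetric])
  also have "\<dots> = 0" using assms(4,5) dW by simp
  finally have "ip S ?d ?d = 0" .
  then have "\<And>r. r \<in> rays S \<Longrightarrow> ?d r = 0" using ip_self_zero[OF assms(1)] by blast
  then show ?thesis
    using assms(2,3) W_Gamma Gamma_supp by (intro fun_eq_on_rays) (auto, blast+)
qed

lemma proj_spec:
  fixes S :: "(real^'n) set set"
  assumes "finite (rays S)" "Z \<subseteq> rays S"
  shows "proj S (W_sub S Z) y \<in> W_sub S Z \<and>
         (\<forall>u\<in>W_sub S Z. ip S (\<lambda>r. y r - proj S (W_sub S Z) y r) u = 0)"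
proof -
  have "\<exists>!p. p \<in> W_sub S Z \<and> (\<forall>u\<in>W_sub S Z. ip S (\<lambda>r. y r - p r) u = 0)"
    using proj_exists[OF assms] proj_unique[OF assms(1)] by blast
  then show ?thesis unfolding proj_def by (rule theI')
qed

lemma W_empty: "W_sub S {} = Gamma_R S" unfolding W_sub_def by auto

lemma chi_star_spec:
  fixes S :: "(real^'n) set set"
  assumes "finite (rays S)"
  shows "chi_star S a \<in> Gamma_R S \<and> (\<forall>v\<in>Gamma_R S. ip S (chi_star S a) v = chi_pair S a v)"
proof -
  have cp: "chi_pair S a v = ip S a v" for v unfolding chi_pair_def ip_def by simp
  obtain p where p: "p \<in> Gamma_R S" "\<forall>u\<in>Gamma_R S. ip S (\<lambda>r. a r - p r) u = 0"
    using proj_exists[OF assms, of "{}" a] W_empty by auto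
  have ex: "p \<in> Gamma_R S \<and> (\<forall>v\<in>Gamma_R S. ip S p v = chi_pair S a v)"
    using p by (simp add: cp ip_diff_left)
  have un: "q = p" if "q \<in> Gamma_R S" "\<forall>v\<in>Gamma_R S. ip S q v = chi_pair S a v" for q
    using proj_unique[OF assms, where p=q and q=p and Z="{}" and y=a] that p by (simp add: W_empty ip_diff_left cp)
  have "\<exists>!c. c \<in> Gamma_R S \<and> (\<forall>v\<in>Gamma_R S. ip S c v = chi_pair S a v)"
    using ex un by blast
  then show ?thesis unfolding chi_star_def by (rule theI')
qed

lemma ip_quad:
  "ip S (\<lambda>r. f r + s * g r) (\<lambda>r. f r + s * g r) = ip S f f + 2 * s * ip S f g + s\<^sup>2 * ip S g g"
proof -
  have "(f r + s * g r) * (f r + s * g r) = f r * f r + 2 * s * (f r * g r) + s\<^sup>2 * (g r * g r)" for r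
    by (simp add: algebra_simps power2_eq_square)
  then show ?thesis unfolding ip_def by (simp add: sum.distrib sum_distrib_left)
qed

lemma Gamma_nonzero_pos:
  assumes "finite (rays S)" "l \<in> Gamma_R S" "l \<noteq> (\<lambda>_. 0)"
  shows "ip S l l > 0"
proof (rule ccontr)
  assume "\<not> ip S l l > 0"
  then have "ip S l l = 0" using ip_self_nonneg[of S l] by linarith
  then have "\<And>r. r \<in> rays S \<Longrightarrow> l r = 0" using ip_self_zero[OF assms(1)] by blast
  then have "l = (\<lambda>_. 0)" using Gamma_supp[OF assms(2)] by (intro ext) (case_tac "xa \<in> rays S", auto)
  then show False using assms(3) by simp
qed

lemma ip_CS: "ip S f g \<le> sqrt (ip S f f) * sqrt (ip S g g)"
proof -
  have "(ip S f g)\<^sup>2 \<le> ip S f f * ip S g g"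
    using Cauchy_Schwarz_ineq_sum[of f g "rays S"] unfolding ip_def by (simp add: power2_eq_square)
  then have "\<bar>ip S f g\<bar> \<le> sqrt (ip S f f * ip S g g)"
    by (intro real_le_rsqrt) simp
  then show ?thesis by (simp add: real_sqrt_mult)
qed

lemma sigma_lin:
  assumes "f \<in> sigma_x S x" "g \<in> sigma_x S x" "\<alpha> \<ge> 0" "\<beta> \<ge> 0"
  shows "(\<lambda>r. \<alpha> * f r + \<beta> * g r) \<in> sigma_x S x"
  using assms Gamma_lin unfolding sigma_x_def by auto

lemma S_supp_sub: "S_supp S x \<subseteq> rays S" unfolding S_supp_def by auto

lemma main_C:
  fixes S :: "(real^'n) set set" and x :: "(real^'n) set \<Rightarrow> complex" and a
  assumes fin: "finite (rays S)"
    and neg: "\<exists>l\<in>sigma_x S x. chi_pair S a l < 0"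
  shows "(\<exists>!l. l \<in> Lambda S a x \<and> adapted S a x l) \<and>
         (\<forall>l. l \<in> Lambda S a x \<and> adapted S a x l \<longrightarrow> M_fun S a x = - nrm S l)"
proof -
  define c where "c = chi_star S a"
  define V where "V Z = (\<lambda>r. - proj S (W_sub S Z) c r)" for Z
  define d where "d l = ip S (\<lambda>r. c r + l r) (\<lambda>r. c r + l r)" for l
  define K where "K = sigma_x S x"
  define Sx where "Sx = S_supp S x"
  have SxR: "Sx \<subseteq> rays S" unfolding Sx_def by (rule S_supp_sub)
  have finSx: "finite Sx" using SxR fin finite_subset by blast
  have cG: "c \<in> Gamma_R S" and cp: "\<And>v. v \<in> Gamma_R S \<Longrightarrow> ip S c v = chi_pair S a v"
    using chi_star_spec[OF fin] unfolding c_def by auto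
  have VW: "V Z \<in> W_sub S Z" and Vorth: "\<forall>u\<in>W_sub S Z. ip S (\<lambda>r. c r + V Z r) u = 0"
    if "Z \<subseteq> rays S" for Z
  proof -
    have P: "proj S (W_sub S Z) c \<in> W_sub S Z"
       "\<forall>u\<in>W_sub S Z. ip S (\<lambda>r. c r - proj S (W_sub S Z) c r) u = 0"
      using proj_spec[OF fin that] by auto
    show "V Z \<in> W_sub S Z" using W_lin[OF P(1) P(1), of "-1" 0] unfolding V_def by simp
    show "\<forall>u\<in>W_sub S Z. ip S (\<lambda>r. c r + V Z r) u = 0" using P(2) unfolding V_def by simp
  qed
  have d_shift: "d (\<lambda>r. v r + s * g r) = d v + 2 * s * ip S (\<lambda>r. c r + v r) g + s\<^sup>2 * ip S g g" for v s g
  proof -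
    have "(\<lambda>r. c r + (v r + s * g r)) = (\<lambda>r. (c r + v r) + s * g r)" by (simp add: add.assoc)
    then show ?thesis unfolding d_def by (simp add: ip_quad)
  qed
  have KG: "K \<subseteq> Gamma_R S" unfolding K_def sigma_x_def by auto
  have Kdef: "l \<in> K \<longleftrightarrow> l \<in> Gamma_R S \<and> (\<forall>r\<in>Sx. l r \<ge> 0)" for l
    unfolding K_def sigma_x_def Sx_def by auto
  have Vself: "ip S c (V Z) = - ip S (V Z) (V Z)" if "Z \<subseteq> rays S" for Z
    using Vorth[OF that] VW[OF that] by (auto simp: ip_add_left)
  have desc: "\<forall>l. l \<in> K \<longrightarrow> card (Sx - {r\<in>Sx. l r = 0}) = n \<longrightarrow> (\<exists>Z\<subseteq>Sx. V Z \<in> K \<and> d (V Z) \<le> d l)" for n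
  proof (induction n rule: less_induct)
    case (less n)
    show ?case
    proof (intro allI impI)
      fix l assume lK: "l \<in> K" and cn: "card (Sx - {r\<in>Sx. l r = 0}) = n"
      define A where "A = {r\<in>Sx. l r = 0}"
      have AR: "A \<subseteq> rays S" using SxR A_def by auto
      define v where "v = V A"
      have vW: "v \<in> W_sub S A" using VW[OF AR] v_def by simp
      have lW: "l \<in> W_sub S A" using lK KG A_def unfolding W_sub_def by auto
      define \<delta> where "\<delta> = (\<lambda>r. l r - v r)"
      have \<delta>W: "\<delta> \<in> W_sub S A" using W_diff[OF lW vW] \<delta>_def by simp
      have orth: "ip S (\<lambda>r. c r + v r) \<delta> = 0" using Vorth[OF AR] \<delta>W v_def by simp
      have ld: "l = (\<lambda>r. v r + 1 * \<delta> r)" unfolding \<delta>_def by simp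
      have dl: "d l = d v + ip S \<delta> \<delta>" by (subst ld, subst d_shift) (simp add: orth)
      show "\<exists>Z\<subseteq>Sx. V Z \<in> K \<and> d (V Z) \<le> d l"
      proof (cases "v \<in> K")
        case True
        then show ?thesis using dl ip_self_nonneg[of S \<delta>] v_def A_def by (intro exI[of _ A]) auto
      next
        case False
        have vG: "v \<in> Gamma_R S" using vW W_Gamma by blast
        define N where "N = {r\<in>Sx. v r < 0}"
        have "\<not> (\<forall>r\<in>Sx. v r \<ge> 0)" using False vG Kdef by blast
        then have Nne: "N \<noteq> {}" unfolding N_def by (auto simp: not_le)
        have finN: "finite N" using finSx N_def by simp
        define t where "t r = l r / (l r - v r)" for r
        have lpos: "l r > 0" if "r \<in> N" for r
        proof -
          have "r \<in> Sx" "v r < 0" using that N_def by auto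
          moreover have "l r \<ge> 0" using lK Kdef \<open>r \<in> Sx\<close> by auto
          moreover have "r \<notin> A" using vW \<open>v r < 0\<close> unfolding W_sub_def by auto
          ultimately show ?thesis using A_def by auto
        qed
        obtain r0 where r0: "r0 \<in> N" "\<forall>r\<in>N. t r0 \<le> t r"
          using ex_min_if_finite[OF finite_imageI[OF finN, of t]] Nne by (auto simp: not_less)
        define s where "s = t r0"
        have r0v: "v r0 < 0" and r0S: "r0 \<in> Sx" using r0 N_def by auto
        have l0: "l r0 > 0" using lpos r0 by auto
        have s01: "0 < s" "s < 1" using l0 r0v unfolding s_def t_def by (auto simp: field_simps)
        define \<mu> where "\<mu> = (\<lambda>r. v r + (1 - s) * \<delta> r)"
        have \<mu>alt: "\<mu> = (\<lambda>r. (1 - s) * l r + s * v r)" unfolding \<mu>_def \<delta>_def by (auto simp: algebra_simps)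
        have \<mu>G: "\<mu> \<in> Gamma_R S" unfolding \<mu>alt using Gamma_lin lK KG vG by blast
        have \<mu>nn: "\<mu> r \<ge> 0" if "r \<in> Sx" for r
        proof (cases "v r < 0")
          case True
          then have rN: "r \<in> N" using that N_def by auto
          have "s \<le> t r" using r0 rN s_def by auto
          moreover have lr: "l r > 0" using lpos rN by auto
          ultimately have "s * (l r - v r) \<le> l r" using True unfolding t_def by (simp add: field_simps)
          then show ?thesis unfolding \<mu>alt by (simp add: algebra_simps)
        next
          case False
          have "l r \<ge> 0" using lK Kdef that by auto
          then show ?thesis unfolding \<mu>alt using False s01 by simp
        qed
        have \<mu>K: "\<mu> \<in> K" using \<mu>G \<mu>nn Kdef by auto
        have \<mu>r0: "\<mu> r0 = 0" unfolding \<mu>alt using l0 r0v unfolding s_def t_def by (simp add: field_simps)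
        have r0A: "r0 \<notin> A" using l0 A_def by auto
        have Asub: "A \<subseteq> {r\<in>Sx. \<mu> r = 0}"
        proof
          fix r assume "r \<in> A"
          then have "l r = 0" "v r = 0" "r \<in> Sx" using A_def vW unfolding W_sub_def by auto
          then show "r \<in> {r\<in>Sx. \<mu> r = 0}" unfolding \<mu>alt by simp
        qed
        have sub: "Sx - {r\<in>Sx. \<mu> r = 0} \<subset> Sx - A" using Asub r0S \<mu>r0 r0A by auto
        have cm: "card (Sx - {r\<in>Sx. \<mu> r = 0}) < n"
          using psubset_card_mono[OF _ sub] finSx cn A_def by auto
        have "d \<mu> = d v + (1 - s)\<^sup>2 * ip S \<delta> \<delta>" unfolding \<mu>_def by (subst d_shift) (simp add: orth)
        also have "\<dots> \<le> d v + ip S \<delta> \<delta>"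
        proof -
          have "(1 - s)\<^sup>2 \<le> 1" using s01 by (simp add: power2_eq_square mult_le_one)
          then show ?thesis using ip_self_nonneg[of S \<delta>] by (simp add: mult_left_le_one_le)
        qed
        finally have "d \<mu> \<le> d l" using dl by simp
        moreover obtain Z where "Z \<subseteq> Sx" "V Z \<in> K" "d (V Z) \<le> d \<mu>"
          using less.IH[OF cm] \<mu>K by blast
        ultimately show ?thesis by (intro exI[of _ Z]) auto
      qed
    qed
  qed
  have descent: "\<exists>Z\<subseteq>Sx. V Z \<in> K \<and> d (V Z) \<le> d l" if "l \<in> K" for l
    using desc that by blast
  define F where "F = {Z. Z \<subseteq> Sx \<and> V Z \<in> K}"
  have finF: "finite F" by (rule finite_subset[of F "Pow Sx"]) (auto simp: F_def finSx)
  have zeroK: "(\<lambda>_. 0) \<in> K" unfolding Kdef Gamma_R_def by simp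
  have Fne: "F \<noteq> {}"
  proof -
    obtain Z where "Z \<subseteq> Sx" "V Z \<in> K" using descent[OF zeroK] by blast
    then have "Z \<in> F" unfolding F_def by simp
    then show ?thesis by blast
  qed
  obtain Z0 where Z0: "Z0 \<in> F" "\<forall>Z\<in>F. d (V Z0) \<le> d (V Z)"
  proof -
    define m where "m = Min ((\<lambda>Z. d (V Z)) ` F)"
    have "m \<in> (\<lambda>Z. d (V Z)) ` F" unfolding m_def using finF Fne by (intro Min_in) auto
    then obtain Z where Z: "Z \<in> F" "m = d (V Z)" by blast
    have "\<forall>Y\<in>F. m \<le> d (V Y)" unfolding m_def using finF by (intro ballI Min_le) auto
    then show ?thesis using that[of Z] Z by simp
  qed
  define v0 where "v0 = V Z0"
  have Z0S: "Z0 \<subseteq> Sx" and v0K: "v0 \<in> K" using Z0 F_def v0_def by auto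
  have Z0R: "Z0 \<subseteq> rays S" using Z0S SxR by auto
  have opt: "d v0 \<le> d l" if lK: "l \<in> K" for l
  proof -
    obtain Z where "Z \<subseteq> Sx" "V Z \<in> K" "d (V Z) \<le> d l" using descent[OF lK] by blast
    then have "Z \<in> F" "d (V Z) \<le> d l" unfolding F_def by auto
    then show ?thesis using Z0(2) unfolding v0_def by (meson order_trans)
  qed
  have v0G: "v0 \<in> Gamma_R S" using v0K KG by auto
  have var: "ip S (\<lambda>r. c r + v0 r) l \<ge> 0" if "l \<in> K" for l
  proof (rule ccontr)
    assume "\<not> ?thesis"
    then have e: "ip S (\<lambda>r. c r + v0 r) l < 0" by simp
    define q where "q = ip S l l + 1"
    have q: "q > 0" using ip_self_nonneg[of S l] q_def by simp
    define t where "t = - ip S (\<lambda>r. c r + v0 r) l / q"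
    have t: "t > 0" using e q unfolding t_def by (simp add: divide_neg_pos)
    have "(\<lambda>r. 1 * v0 r + t * l r) \<in> sigma_x S x"
      by (rule sigma_lin) (use v0K that t K_def in auto)
    then have "(\<lambda>r. v0 r + t * l r) \<in> K" unfolding K_def by simp
    then have "d v0 \<le> d (\<lambda>r. v0 r + t * l r)" using opt by simp
    also have "\<dots> = d v0 + 2 * t * ip S (\<lambda>r. c r + v0 r) l + t\<^sup>2 * ip S l l" by (rule d_shift)
    finally have "0 \<le> t * (2 * ip S (\<lambda>r. c r + v0 r) l + t * ip S l l)"
      by (simp add: power2_eq_square algebra_simps)
    then have "0 \<le> 2 * ip S (\<lambda>r. c r + v0 r) l + t * ip S l l" using t
      by (simp add: zero_le_mult_iff)
    moreover have "t * ip S l l \<le> - ip S (\<lambda>r. c r + v0 r) l"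
    proof -
      have "t * ip S l l \<le> t * q" using t q_def by simp
      also have "\<dots> = - ip S (\<lambda>r. c r + v0 r) l" using q t_def by simp
      finally show ?thesis .
    qed
    ultimately show False using e by linarith
  qed
  have v0self: "ip S c v0 = - ip S v0 v0" using Vself[OF Z0R] v0_def by simp
  have v0nz: "v0 \<noteq> (\<lambda>_. 0)"
  proof
    assume z: "v0 = (\<lambda>_. 0)"
    obtain l where l: "l \<in> K" "chi_pair S a l < 0" using neg K_def by blast
    have "ip S c l < 0" using cp l KG by auto
    moreover have "ip S (\<lambda>r. c r + v0 r) l = ip S c l" using z by simp
    ultimately show False using var[OF l(1)] by simp
  qed
  have pos0: "ip S v0 v0 > 0" using Gamma_nonzero_pos[OF fin v0G v0nz] .
  have ratio0: "chi_pair S a v0 / nrm S v0 = - nrm S v0"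
  proof -
    have "chi_pair S a v0 = - ip S v0 v0" using cp[OF v0G] v0self by simp
    also have "\<dots> = - (nrm S v0 * nrm S v0)" unfolding nrm_def using pos0 by simp
    finally show ?thesis using pos0 unfolding nrm_def by (simp add: real_div_sqrt)
  qed
  have lower: "chi_pair S a l / nrm S l \<ge> - nrm S v0" if "l \<in> K" "l \<noteq> (\<lambda>_. 0)" for l
  proof -
    have lG: "l \<in> Gamma_R S" using that KG by auto
    have pl: "nrm S l > 0" using Gamma_nonzero_pos[OF fin lG that(2)] unfolding nrm_def by simp
    have "ip S c l + ip S v0 l \<ge> 0" using var[OF that(1)] by (simp add: ip_add_left)
    moreover have "ip S v0 l \<le> nrm S v0 * nrm S l" using ip_CS unfolding nrm_def by blast
    ultimately have "chi_pair S a l \<ge> - nrm S v0 * nrm S l" using cp[OF lG] by simp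
    then show ?thesis using pl by (simp add: field_simps)
  qed
  have Mval: "M_fun S a x = - nrm S v0"
    unfolding M_fun_def
  proof (rule cInf_eq_minimum)
    show "- nrm S v0 \<in> {chi_pair S a l / nrm S l |l. l \<in> sigma_x S x \<and> l \<noteq> (\<lambda>_. 0)}"
      using ratio0 v0K v0nz unfolding K_def by (intro CollectI exI[of _ v0]) simp
    show "\<And>y. y \<in> {chi_pair S a l / nrm S l |l. l \<in> sigma_x S x \<and> l \<noteq> (\<lambda>_. 0)} \<Longrightarrow> - nrm S v0 \<le> y"
      using lower K_def by auto
  qed
  have LamE: "\<exists>Z. Z \<subseteq> Sx \<and> l = V Z \<and> l \<in> K" if "l \<in> Lambda S a x" for l
    using that unfolding Lambda_def V_def c_def Sx_def K_def by auto
  have ratioL: "chi_pair S a l / nrm S l = - nrm S l" if lL: "l \<in> Lambda S a x" and lnz: "l \<noteq> (\<lambda>_. 0)" for l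
  proof -
    obtain Z where Z: "Z \<subseteq> Sx" "l = V Z" "l \<in> K" using LamE[OF lL] by blast
    have ZR: "Z \<subseteq> rays S" using Z SxR by auto
    have lG: "l \<in> Gamma_R S" using Z KG by auto
    have pl: "ip S l l > 0" using Gamma_nonzero_pos[OF fin lG lnz] .
    have "chi_pair S a l = - ip S l l" using cp[OF lG] Vself[OF ZR] Z by simp
    also have "\<dots> = - (nrm S l * nrm S l)" unfolding nrm_def using pl by simp
    finally show ?thesis using pl unfolding nrm_def by (simp add: real_div_sqrt)
  qed
  have v0Lam: "v0 \<in> Lambda S a x"
    unfolding Lambda_def using Z0S v0K unfolding v0_def V_def c_def Sx_def K_def by blast
  have v0ad: "adapted S a x v0" unfolding adapted_def using v0G v0nz ratio0 Mval by simp
  have uniq: "l = v0" if lL: "l \<in> Lambda S a x" and lad: "adapted S a x l" for l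
  proof -
    have lnz: "l \<noteq> (\<lambda>_. 0)" and lG: "l \<in> Gamma_R S" using lad unfolding adapted_def by auto
    obtain Z where Z: "Z \<subseteq> Sx" "l = V Z" "l \<in> K" using LamE[OF lL] by blast
    have ZR: "Z \<subseteq> rays S" using Z SxR by auto
    have "nrm S l = nrm S v0" using ratioL[OF lL lnz] lad Mval unfolding adapted_def by simp
    then have nn: "ip S l l = ip S v0 v0" unfolding nrm_def
      using ip_self_nonneg[of S l] ip_self_nonneg[of S v0] by simp
    have cl: "ip S c l = - ip S l l" using Vself[OF ZR] Z by simp
    have "ip S c l + ip S v0 l \<ge> 0" using var[OF Z(3)] by (simp add: ip_add_left)
    then have vl: "ip S v0 l \<ge> ip S l l" using cl by simp
    define \<delta> where "\<delta> = (\<lambda>r. l r - v0 r)"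
    have "ip S \<delta> \<delta> = ip S l l - 2 * ip S v0 l + ip S v0 v0"
      unfolding \<delta>_def by (simp add: ip_diff_left ip_sym[of S _ "\<lambda>r. l r - v0 r"] ip_sym[of S l v0])
    then have "ip S \<delta> \<delta> \<le> 0" using nn vl by simp
    then have "ip S \<delta> \<delta> = 0" using ip_self_nonneg[of S \<delta>] by simp
    then have "\<And>r. r \<in> rays S \<Longrightarrow> l r = v0 r" using ip_self_zero[OF fin] \<delta>_def by fastforce
    moreover have "\<forall>r. r \<notin> rays S \<longrightarrow> l r = 0" "\<forall>r. r \<notin> rays S \<longrightarrow> v0 r = 0"
      using lG v0G Gamma_supp by blast+
    ultimately show ?thesis by (intro fun_eq_on_rays) auto
  qed
  have part1: "\<exists>!l. l \<in> Lambda S a x \<and> adapted S a x l"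
    using v0Lam v0ad uniq by blast
  have part2: "\<forall>l. l \<in> Lambda S a x \<and> adapted S a x l \<longrightarrow> M_fun S a x = - nrm S l"
  proof (intro allI impI)
    fix l assume "l \<in> Lambda S a x \<and> adapted S a x l"
    then show "M_fun S a x = - nrm S l" using ratioL[of l] unfolding adapted_def by auto
  qed
  show ?thesis using part1 part2 by blast
qed

definition rayof :: "real^'n \<Rightarrow> (real^'n) set" where
  "rayof s = {t *\<^sub>R s | t. t \<ge> 0}"

lemma gen_cone_mem: "y \<in> gen_cone S \<longleftrightarrow> (\<exists>c. (\<forall>s\<in>S. c s \<ge> 0) \<and> y = (\<Sum>s\<in>S. c s *\<^sub>R s))"
  unfolding gen_cone_def by auto

lemma gen_cone_zero: "0 \<in> gen_cone S"
  unfolding gen_cone_mem by (intro exI[of _ "\<lambda>_. 0"]) simp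

lemma gen_cone_add: assumes "y \<in> gen_cone S" "z \<in> gen_cone S" shows "y + z \<in> gen_cone S"
proof -
  obtain c d where "\<forall>s\<in>S. c s \<ge> 0" "y = (\<Sum>s\<in>S. c s *\<^sub>R s)" "\<forall>s\<in>S. d s \<ge> 0" "z = (\<Sum>s\<in>S. d s *\<^sub>R s)"
    using assms unfolding gen_cone_mem by blast
  then show ?thesis unfolding gen_cone_mem
    by (intro exI[of _ "\<lambda>s. c s + d s"]) (auto simp: scaleR_add_left sum.distrib)
qed

lemma gen_cone_scale: assumes "y \<in> gen_cone S" "k \<ge> 0" shows "k *\<^sub>R y \<in> gen_cone S"
proof -
  obtain c where "\<forall>s\<in>S. c s \<ge> 0" "y = (\<Sum>s\<in>S. c s *\<^sub>R s)"
    using assms unfolding gen_cone_mem by blast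
  then show ?thesis unfolding gen_cone_mem using assms(2)
    by (intro exI[of _ "\<lambda>s. k * c s"]) (auto simp: scaleR_sum_right)
qed

lemma gen_cone_gen: assumes "finite S" "s \<in> S" shows "s \<in> gen_cone S"
proof -
  have "s = (\<Sum>r\<in>S. (if r = s then 1 else 0) *\<^sub>R r)"
    using assms by (simp add: if_distrib[of "\<lambda>c. c *\<^sub>R _"] sum.delta cong: if_cong)
  then show ?thesis unfolding gen_cone_mem by (intro exI[of _ "\<lambda>r. if r = s then 1 else 0"]) auto
qed

lemma gen_cone_mono: assumes "finite S" "T \<subseteq> S" shows "gen_cone T \<subseteq> gen_cone S"
proof
  fix y assume "y \<in> gen_cone T"
  then obtain c where c: "\<forall>s\<in>T. c s \<ge> 0" "y = (\<Sum>s\<in>T. c s *\<^sub>R s)" unfolding gen_cone_mem by blast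
  let ?c = "\<lambda>s. if s \<in> T then c s else 0"
  have "(\<Sum>s\<in>S. ?c s *\<^sub>R s) = (\<Sum>s\<in>T. c s *\<^sub>R s)"
    using assms by (simp add: if_distrib[of "\<lambda>c. c *\<^sub>R _"] sum.If_cases Int_absorb1 cong: if_cong)
  then show "y \<in> gen_cone S" unfolding gen_cone_mem using c by (intro exI[of _ ?c]) auto
qed

lemma gen_cone_absorb:
  assumes "finite S" "s \<in> S" "s \<in> gen_cone (S - {s})"
  shows "gen_cone (S - {s}) = gen_cone S"
proof
  show "gen_cone (S - {s}) \<subseteq> gen_cone S" using gen_cone_mono assms by blast
next
  show "gen_cone S \<subseteq> gen_cone (S - {s})"
  proof
    fix y assume "y \<in> gen_cone S"
    then obtain c where c: "\<forall>r\<in>S. c r \<ge> 0" "y = (\<Sum>r\<in>S. c r *\<^sub>R r)" unfolding gen_cone_mem by blast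
    obtain d where d: "\<forall>r\<in>S - {s}. d r \<ge> 0" "s = (\<Sum>r\<in>S - {s}. d r *\<^sub>R r)"
      using assms(3) unfolding gen_cone_mem by blast
    have "y = c s *\<^sub>R s + (\<Sum>r\<in>S - {s}. c r *\<^sub>R r)" using c(2) assms by (simp add: sum.remove)
    also have "\<dots> = (\<Sum>r\<in>S - {s}. (c s * d r + c r) *\<^sub>R r)"
      by (subst (1) d(2)) (simp add: scaleR_sum_right scaleR_add_left sum.distrib)
    finally show "y \<in> gen_cone (S - {s})" unfolding gen_cone_mem using c(1) d(1) assms(2)
      by (intro exI[of _ "\<lambda>r. c s * d r + c r"]) auto
  qed
qed

lemma minkowski_reduce:
  fixes S :: "(real^'n) set"
  assumes "finite S"
  shows "\<exists>S'\<subseteq>S. gen_cone S' = gen_cone S \<and> (\<forall>s\<in>S'. s \<notin> gen_cone (S' - {s}))"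
  using assms
proof (induction "card S" arbitrary: S rule: less_induct)
  case less
  show ?case
  proof (cases "\<exists>s\<in>S. s \<in> gen_cone (S - {s})")
    case True
    then obtain s where s: "s \<in> S" "s \<in> gen_cone (S - {s})" by blast
    have "card (S - {s}) < card S" using card_Diff1_less[OF less.prems s(1)] .
    then obtain S' where "S' \<subseteq> S - {s}" "gen_cone S' = gen_cone (S - {s})" "\<forall>s\<in>S'. s \<notin> gen_cone (S' - {s})"
      using less.hyps[of "S - {s}"] less.prems by blast
    then show ?thesis using gen_cone_absorb[OF less.prems s] by auto
  next
    case False
    then show ?thesis by blast
  qed
qed

lemma sc_zero: assumes "strongly_convex C" "z \<in> C" "- z \<in> C" shows "z = 0"
proof -
  have "z \<in> uminus ` C" using assms(3) by (metis image_eqI minus_minus)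
  then show ?thesis using assms(1,2) unfolding strongly_convex_def by blast
qed

lemma ray_core:
  fixes S :: "(real^'n) set"
  assumes fin: "finite S" and sc: "strongly_convex (gen_cone S)" and sS: "s \<in> S"
    and ext: "s \<notin> gen_cone (S - {s})"
    and p: "p \<in> gen_cone S" and q: "q \<in> gen_cone S" and pq: "p + q \<in> rayof s"
  shows "p \<in> rayof s"
proof -
  obtain \<alpha> where \<alpha>: "\<forall>r\<in>S. \<alpha> r \<ge> 0" "p = (\<Sum>r\<in>S. \<alpha> r *\<^sub>R r)" using p unfolding gen_cone_mem by blast
  obtain \<beta> where \<beta>: "\<forall>r\<in>S. \<beta> r \<ge> 0" "q = (\<Sum>r\<in>S. \<beta> r *\<^sub>R r)" using q unfolding gen_cone_mem by blast
  obtain t where t: "t \<ge> 0" "p + q = t *\<^sub>R s" using pq unfolding rayof_def by blast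
  define P where "P = (\<Sum>r\<in>S - {s}. \<alpha> r *\<^sub>R r)"
  define Q where "Q = (\<Sum>r\<in>S - {s}. \<beta> r *\<^sub>R r)"
  have pP: "p = \<alpha> s *\<^sub>R s + P" unfolding P_def \<alpha>(2) using fin sS by (simp add: sum.remove)
  have qQ: "q = \<beta> s *\<^sub>R s + Q" unfolding Q_def \<beta>(2) using fin sS by (simp add: sum.remove)
  have PC0: "P \<in> gen_cone (S - {s})" unfolding P_def gen_cone_mem using \<alpha>(1) by auto
  have QC0: "Q \<in> gen_cone (S - {s})" unfolding Q_def gen_cone_mem using \<beta>(1) by auto
  have sub: "gen_cone (S - {s}) \<subseteq> gen_cone S" using gen_cone_mono[OF fin] by blast
  define k where "k = t - \<alpha> s - \<beta> s"
  have PQ: "P + Q = k *\<^sub>R s" using t(2) pP qQ unfolding k_def by (simp add: algebra_simps)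
  have "\<not> k > 0"
  proof
    assume k: "k > 0"
    have "s = (1 / k) *\<^sub>R (P + Q)" using PQ k by simp
    moreover have "P + Q \<in> gen_cone (S - {s})" using gen_cone_add[OF PC0 QC0] .
    ultimately have "s \<in> gen_cone (S - {s})" using gen_cone_scale[of "P + Q" "S - {s}" "1 / k"] k by simp
    then show False using ext by simp
  qed
  then have k: "k \<le> 0" by simp
  have "- (P + Q) \<in> gen_cone S"
    using PQ gen_cone_scale[OF gen_cone_gen[OF fin sS], of "- k"] k by simp
  moreover have "P + Q \<in> gen_cone S" using gen_cone_add[OF PC0 QC0] sub by blast
  ultimately have "P + Q = 0" using sc_zero[OF sc] by blast
  then have "- P = Q" by (simp add: add_eq_0_iff)
  then have "P = 0" using sc_zero[OF sc, of P] PC0 QC0 sub by blast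
  then have "p = \<alpha> s *\<^sub>R s" using pP by simp
  then show ?thesis unfolding rayof_def using \<alpha>(1) sS by blast
qed

lemma ray_face:
  fixes S :: "(real^'n) set"
  assumes fin: "finite S" and sc: "strongly_convex (gen_cone S)" and sS: "s \<in> S"
    and ext: "s \<notin> gen_cone (S - {s})"
  shows "rayof s face_of gen_cone S"
  unfolding face_of_def
proof (intro conjI ballI impI)
  show "rayof s \<subseteq> gen_cone S"
    unfolding rayof_def using gen_cone_scale[OF gen_cone_gen[OF fin sS]] by blast
  have re: "rayof s = (\<lambda>t. t *\<^sub>R s) ` {0..}" unfolding rayof_def by auto
  show "convex (rayof s)" unfolding re
    by (rule convex_linear_image) (auto intro: linear_scaleR_left)
next
  fix a b z assume a: "a \<in> gen_cone S" and b: "b \<in> gen_cone S" and z: "z \<in> rayof s"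
    and seg: "z \<in> open_segment a b"
  obtain u where u: "0 < u" "u < 1" "z = (1 - u) *\<^sub>R a + u *\<^sub>R b" using seg unfolding in_segment by blast
  have a1: "(1 - u) *\<^sub>R a \<in> gen_cone S" using gen_cone_scale[OF a] u by simp
  have b1: "u *\<^sub>R b \<in> gen_cone S" using gen_cone_scale[OF b] u by simp
  have za: "(1 - u) *\<^sub>R a \<in> rayof s" using ray_core[OF fin sc sS ext a1 b1] z u by simp
  have zb: "u *\<^sub>R b \<in> rayof s" using ray_core[OF fin sc sS ext b1 a1] z u by (simp add: add.commute)
  have rs: "c *\<^sub>R w \<in> rayof s" if w: "w \<in> rayof s" and c0: "c \<ge> 0" for c w
  proof -
    obtain t where "w = t *\<^sub>R s" "t \<ge> 0" using w unfolding rayof_def by blast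
    then have "c *\<^sub>R w = (c * t) *\<^sub>R s" "c * t \<ge> 0" using c0 by auto
    then show ?thesis unfolding rayof_def by blast
  qed
  show "a \<in> rayof s" using rs[OF za, of "1 / (1 - u)"] u by simp
  show "b \<in> rayof s" using rs[OF zb, of "1 / u"] u by simp
qed

lemma ray_aff_dim:
  fixes s :: "real^'n"
  assumes "s \<noteq> 0"
  shows "aff_dim (rayof s) = 1"
proof -
  have 0: "0 \<in> rayof s" unfolding rayof_def by (auto intro!: exI[of _ 0])
  have h: "0 \<in> affine hull (rayof s)" by (rule hull_inc[OF 0])
  have s1: "rayof s \<subseteq> span {s}"
  proof
    fix y assume "y \<in> rayof s"
    then obtain t where "y = t *\<^sub>R s" unfolding rayof_def by blast
    then show "y \<in> span {s}" by (simp add: span_scale span_base)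
  qed
  have "s \<in> rayof s" unfolding rayof_def by (rule CollectI, rule exI[of _ 1]) simp
  then have s2: "{s} \<subseteq> span (rayof s)" by (simp add: span_base)
  have sp: "span (rayof s) = span {s}" using s1 s2 span_eq by blast
  have dd: "dim (rayof s) = dim {s}" by (metis sp dim_span)
  have "aff_dim (rayof s) = int (dim ((+) (- 0) ` rayof s))"
    by (rule aff_dim_eq_dim[OF h])
  also have "\<dots> = int (dim (rayof s))" by simp
  also have "\<dots> = 1" using dd assms by simp
  finally show ?thesis .
qed

lemma Ints_nonneg_nat: assumes "(y::real) \<in> \<int>" "y \<ge> 0" shows "\<exists>m::nat. y = real m"
proof -
  obtain z where z: "y = of_int z" using assms(1) by (auto elim: Ints_cases)
  then have "z \<ge> 0" using assms(2) by simp
  then have "y = real (nat z)" using z by simp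
  then show ?thesis by blast
qed

lemma lattice_diff: "lattice_pt a \<Longrightarrow> lattice_pt b \<Longrightarrow> lattice_pt (a - b)"
  unfolding lattice_pt_def by simp

lemma lattice_nat_scale: "lattice_pt a \<Longrightarrow> lattice_pt (real k *\<^sub>R a)"
  unfolding lattice_pt_def by simp

lemma ray_gen_ray:
  fixes s :: "real^'n"
  assumes lat: "lattice_pt s" and s0: "s \<noteq> 0"
  shows "\<exists>\<mu>>0. ray_gen (rayof s) = \<mu> *\<^sub>R s"
proof -
  obtain i where si: "s $ i \<noteq> 0" using s0 by (metis vec_eq_iff zero_index)
  obtain N :: nat where N: "\<bar>s $ i\<bar> = real N"
    using Ints_nonneg_nat[of "\<bar>s $ i\<bar>"] lat unfolding lattice_pt_def by auto
  have Npos: "N > 0" using N si by auto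
  define P where "P k \<longleftrightarrow> k > 0 \<and> lattice_pt ((real k / real N) *\<^sub>R s)" for k
  have PN: "P N" unfolding P_def using Npos lat by simp
  define k0 where "k0 = (LEAST k. P k)"
  have Pk0: "P k0" unfolding k0_def using PN by (rule LeastI)
  have k0min: "\<not> P r" if "r < k0" for r using not_less_Least[of r P] that k0_def by simp
  have k0pos: "k0 > 0" using Pk0 P_def by simp
  define v where "v = (real k0 / real N) *\<^sub>R s"
  have vlat: "lattice_pt v" using Pk0 P_def v_def by simp
  have vray: "v \<in> rayof s" unfolding rayof_def v_def by (rule CollectI, rule exI[of _ "real k0 / real N"]) simp
  have v0: "v \<noteq> 0" unfolding v_def using k0pos Npos s0 by simp
  have vprop: "\<exists>k::nat. w = real k *\<^sub>R v" if w: "w \<in> rayof s" "w \<noteq> 0" "lattice_pt w" for w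
  proof -
    obtain t where t: "w = t *\<^sub>R s" "t \<ge> 0" using w(1) unfolding rayof_def by blast
    have tpos: "t > 0" using t w(2) by (cases "t = 0") auto
    have wi: "w $ i \<in> \<int>" using w(3) unfolding lattice_pt_def by simp
    obtain m :: nat where m: "\<bar>w $ i\<bar> = real m" using Ints_nonneg_nat[of "\<bar>w $ i\<bar>"] wi by auto
    have "\<bar>w $ i\<bar> = t * real N" using t N by (simp add: abs_mult)
    then have tm: "t = real m / real N" using m Npos by (simp add: field_simps)
    have mpos: "m > 0" using tm tpos by (cases "m = 0") auto
    define q where "q = m div k0"
    define r where "r = m mod k0"
    have mqr: "m = q * k0 + r" unfolding q_def r_def by simp
    have "(real r / real N) *\<^sub>R s = w - real q *\<^sub>R v"
    proof -
      have "real m = real q * real k0 + real r" using mqr by (metis of_nat_add of_nat_mult)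
      then have e: "real r / real N = real m / real N - real q * (real k0 / real N)"
        using Npos by (simp add: field_simps)
      show ?thesis unfolding t(1) tm v_def e by (simp only: scaleR_diff_left scaleR_scaleR)
    qed
    then have rlat: "lattice_pt ((real r / real N) *\<^sub>R s)"
      using lattice_diff[OF w(3) lattice_nat_scale[OF vlat]] by simp
    have "r < k0" unfolding r_def using k0pos by simp
    then have "\<not> P r" by (rule k0min)
    then have "r = 0" using rlat P_def by auto
    then have "w = real q *\<^sub>R v" unfolding t(1) tm v_def using mqr Npos by (simp add: field_simps)
    then show ?thesis by blast
  qed
  define Q where "Q v' \<longleftrightarrow> v' \<in> rayof s \<and> v' \<noteq> 0 \<and> lattice_pt v' \<and>
      (\<forall>w. w \<in> rayof s \<and> w \<noteq> 0 \<and> lattice_pt w \<longrightarrow> (\<exists>k::nat. w = real k *\<^sub>R v'))" for v'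
  have Qv: "Q v" unfolding Q_def using vray v0 vlat vprop by blast
  have Qu: "v' = v" if Qv': "Q v'" for v'
  proof -
    have "\<exists>k::nat. v' = real k *\<^sub>R v" using vprop Qv' unfolding Q_def by blast
    then obtain k :: nat where k: "v' = real k *\<^sub>R v" by blast
    have "\<exists>k'::nat. v = real k' *\<^sub>R v'" using Qv' vray v0 vlat unfolding Q_def by blast
    then obtain k' :: nat where k': "v = real k' *\<^sub>R v'" by blast
    have "v = (real k' * real k) *\<^sub>R v" using k' unfolding k by (simp only: scaleR_scaleR)
    then have "real k' * real k = 1" using v0 by (metis scaleR_cancel_right scaleR_one)
    then have "k = 1" by (metis of_nat_1 of_nat_eq_iff of_nat_mult nat_mult_eq_1_iff)
    then show ?thesis using k by simp
  qed
  have "ray_gen (rayof s) = v"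
    unfolding ray_gen_def using Qv Qu unfolding Q_def by (intro the_equality) blast+
  then show ?thesis unfolding v_def using k0pos Npos by (intro exI[of _ "real k0 / real N"]) simp
qed

lemma exists_neg:
  fixes \<Sigma> :: "(real^'n) set set" and x :: "(real^'n) set \<Rightarrow> complex" and a
  assumes pf: "projective_fan \<Sigma>" and xu: "x \<in> unstable_locus \<Sigma>" and am: "ample_divisor \<Sigma> a"
  shows "\<exists>l\<in>sigma_x \<Sigma> x. chi_pair \<Sigma> a l < 0"
proof -
  have fan: "is_fan \<Sigma>" and cover: "\<Union>\<Sigma> = UNIV" using pf unfolding projective_fan_def complete_fan_def by auto
  have finS: "finite \<Sigma>" using fan unfolding is_fan_def by auto
  define R where "R = rays \<Sigma>"
  have RS: "R \<subseteq> \<Sigma>" unfolding R_def rays_def by auto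
  have finR: "finite R" using finS RS finite_subset by blast
  obtain C where C: "primitive_collection \<Sigma> C" "\<forall>\<rho>\<in>C. x \<rho> = 0"
    using xu unfolding unstable_locus_def by blast
  have CR: "C \<subseteq> R" using C(1) unfolding primitive_collection_def R_def by auto
  have finC: "finite C" using CR finR finite_subset by blast
  define w where "w = (\<Sum>\<rho>\<in>C. ray_gen \<rho>)"
  obtain \<sigma> where \<sigma>: "\<sigma> \<in> \<Sigma>" "w \<in> \<sigma>" using cover by blast
  have "rational_polyhedral_cone \<sigma>" and sc\<sigma>: "strongly_convex \<sigma>" using fan \<sigma>(1) unfolding is_fan_def by auto
  then obtain S where S: "finite S" "\<forall>s\<in>S. lattice_pt s" "\<sigma> = gen_cone S"
    unfolding rational_polyhedral_cone_def by blast
  obtain S' where S': "S' \<subseteq> S" "gen_cone S' = gen_cone S" "\<forall>s\<in>S'. s \<notin> gen_cone (S' - {s})"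
    using minkowski_reduce[OF S(1)] by blast
  have finS': "finite S'" using S'(1) S(1) finite_subset by blast
  have \<sigma>S': "\<sigma> = gen_cone S'" using S' S by simp
  have scS': "strongly_convex (gen_cone S')" using sc\<sigma> \<sigma>S' by simp
  have s_nz: "s \<noteq> 0" if "s \<in> S'" for s using S'(3) that gen_cone_zero by metis
  have s_lat: "lattice_pt s" if "s \<in> S'" for s using S'(1) S(2) that by blast
  have s_face: "rayof s face_of \<sigma>" if "s \<in> S'" for s
    using ray_face[OF finS' scS' that] S'(3) that \<sigma>S' by simp
  have s_ray: "rayof s \<in> R" if "s \<in> S'" for s
  proof -
    have "0 \<in> rayof s" unfolding rayof_def by (rule CollectI, rule exI[of _ 0]) simp
    then have "rayof s \<in> \<Sigma>" using fan \<sigma>(1) s_face[OF that] unfolding is_fan_def by blast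
    then show ?thesis unfolding R_def rays_def using ray_aff_dim[OF s_nz[OF that]] by simp
  qed
  have s_sub: "rayof s \<subseteq> \<sigma>" if "s \<in> S'" for s using s_face[OF that] face_of_imp_subset by blast
  have "\<forall>s\<in>S'. \<exists>\<mu>>0. ray_gen (rayof s) = \<mu> *\<^sub>R s"
  proof
    fix s assume sS: "s \<in> S'"
    show "\<exists>\<mu>>0. ray_gen (rayof s) = \<mu> *\<^sub>R s" by (rule ray_gen_ray[OF s_lat[OF sS] s_nz[OF sS]])
  qed
  from bchoice[OF this] obtain \<mu> where \<mu>: "\<forall>s\<in>S'. \<mu> s > 0 \<and> ray_gen (rayof s) = \<mu> s *\<^sub>R s" by blast
  have "w \<in> gen_cone S'" using \<sigma>(2) \<sigma>S' by simp
  then obtain c where c: "\<forall>s\<in>S'. c s \<ge> 0" "w = (\<Sum>s\<in>S'. c s *\<^sub>R s)"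
    unfolding gen_cone_mem by blast
  have inj: "inj_on rayof S'"
  proof (rule inj_onI, rule ccontr)
    fix s1 s2 assume s1: "s1 \<in> S'" and s2: "s2 \<in> S'" and eq: "rayof s1 = rayof s2" and ne: "s1 \<noteq> s2"
    have "s2 \<in> rayof s2" unfolding rayof_def by (rule CollectI, rule exI[of _ 1]) simp
    then obtain t where t: "s2 = t *\<^sub>R s1" "t \<ge> 0" using eq unfolding rayof_def by blast
    have "s1 \<in> gen_cone (S' - {s2})" using gen_cone_gen[of "S' - {s2}" s1] finS' s1 ne by auto
    then have "s2 \<in> gen_cone (S' - {s2})" using gen_cone_scale t by metis
    then show False using S'(3) s2 by blast
  qed
  define g where "g = inv_into S' rayof"
  define coef where "coef \<rho> = (if \<rho> \<in> rayof ` S' then c (g \<rho>) / \<mu> (g \<rho>) else 0)" for \<rho>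
  have gg: "g (rayof s) = s" if "s \<in> S'" for s unfolding g_def using inj that by (rule inv_into_f_f)
  have coef_nn: "coef \<rho> \<ge> 0" for \<rho>
  proof (cases "\<rho> \<in> rayof ` S'")
    case True
    then obtain s where "s \<in> S'" "\<rho> = rayof s" by blast
    then show ?thesis unfolding coef_def using gg c(1) \<mu> by (simp add: less_imp_le)
  qed (simp add: coef_def)
  have coef_w: "(\<Sum>\<rho>\<in>R. coef \<rho> *\<^sub>R ray_gen \<rho>) = w"
  proof -
    have "(\<Sum>\<rho>\<in>R. coef \<rho> *\<^sub>R ray_gen \<rho>) = (\<Sum>\<rho>\<in>rayof ` S'. coef \<rho> *\<^sub>R ray_gen \<rho>)"
      by (rule sum.mono_neutral_right) (use finR s_ray coef_def in auto)
    also have "\<dots> = (\<Sum>s\<in>S'. coef (rayof s) *\<^sub>R ray_gen (rayof s))"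
      by (rule sum.reindex[OF inj, unfolded comp_def])
    also have "\<dots> = (\<Sum>s\<in>S'. c s *\<^sub>R s)"
      by (rule sum.cong) (use gg \<mu> in \<open>auto simp: coef_def\<close>)
    finally show ?thesis using c(2) by simp
  qed
  have coef_sub: "\<rho> \<subseteq> \<sigma>" if "coef \<rho> \<noteq> 0" for \<rho>
  proof -
    have "\<rho> \<in> rayof ` S'" using that coef_def by (cases "\<rho> \<in> rayof ` S'") auto
    then show ?thesis using s_sub by blast
  qed
  define l where "l \<rho> = (if \<rho> \<in> R then coef \<rho> - (if \<rho> \<in> C then 1 else 0) else 0)" for \<rho>
  have lG: "l \<in> Gamma_R \<Sigma>"
  proof -
    have "(\<Sum>\<rho>\<in>R. l \<rho> *\<^sub>R ray_gen \<rho>) = (\<Sum>\<rho>\<in>R. coef \<rho> *\<^sub>R ray_gen \<rho>) - (\<Sum>\<rho>\<in>R. (if \<rho> \<in> C then ray_gen \<rho> else 0))"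
      unfolding l_def by (simp add: scaleR_diff_left sum_subtractf if_distrib[of "\<lambda>c. c *\<^sub>R _"] cong: if_cong)
    also have "(\<Sum>\<rho>\<in>R. (if \<rho> \<in> C then ray_gen \<rho> else 0)) = w"
      unfolding w_def using sum.inter_restrict[OF finR, of ray_gen C] CR by (simp add: Int_absorb1)
    finally have "(\<Sum>\<rho>\<in>R. l \<rho> *\<^sub>R ray_gen \<rho>) = 0" using coef_w by simp
    then show ?thesis unfolding Gamma_R_def R_def l_def by auto
  qed
  have lK: "l \<in> sigma_x \<Sigma> x"
    unfolding sigma_x_def S_supp_def using lG C(2) coef_nn by (auto simp: l_def R_def)
  obtain \<tau> where \<tau>: "\<tau> \<in> {\<tau>\<in>\<Sigma>. \<sigma> \<subseteq> \<tau>}" "\<forall>b\<in>{\<tau>\<in>\<Sigma>. \<sigma> \<subseteq> \<tau>}. \<tau> \<le> b \<longrightarrow> \<tau> = b"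
    using finite_has_maximal[of "{\<tau>\<in>\<Sigma>. \<sigma> \<subseteq> \<tau>}"] finS \<sigma>(1) by auto
  have mc: "maximal_cone \<Sigma> \<tau>" unfolding maximal_cone_def using \<tau> by auto
  obtain m where m: "\<forall>\<rho>\<in>rays \<Sigma>. (\<rho> \<subseteq> \<tau> \<longrightarrow> m \<bullet> ray_gen \<rho> = - a \<rho>) \<and> (\<not> \<rho> \<subseteq> \<tau> \<longrightarrow> m \<bullet> ray_gen \<rho> > - a \<rho>)"
    using am mc unfolding ample_divisor_def by blast
  have st: "\<sigma> \<subseteq> \<tau>" using \<tau>(1) by simp
  have A1: "(\<Sum>\<rho>\<in>R. a \<rho> * coef \<rho>) = - (m \<bullet> w)"
  proof -
    have "(\<Sum>\<rho>\<in>R. a \<rho> * coef \<rho>) = (\<Sum>\<rho>\<in>R. - (coef \<rho> * (m \<bullet> ray_gen \<rho>)))"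
    proof (rule sum.cong)
      fix \<rho> assume r: "\<rho> \<in> R"
      show "a \<rho> * coef \<rho> = - (coef \<rho> * (m \<bullet> ray_gen \<rho>))"
      proof (cases "coef \<rho> = 0")
        case False
        then have "\<rho> \<subseteq> \<tau>" using coef_sub st by blast
        then show ?thesis using m r unfolding R_def by auto
      qed simp
    qed simp
    also have "\<dots> = - (m \<bullet> (\<Sum>\<rho>\<in>R. coef \<rho> *\<^sub>R ray_gen \<rho>))"
      by (simp add: inner_sum_right sum_negf)
    finally show ?thesis using coef_w by simp
  qed
  have A2: "(\<Sum>\<rho>\<in>C. a \<rho>) > - (m \<bullet> w)"
  proof -
    have "\<not> C \<subseteq> cone_rays \<Sigma> \<tau>" using C(1) \<tau>(1) unfolding primitive_collection_def by simp
    then obtain \<rho>0 where r0: "\<rho>0 \<in> C" "\<not> \<rho>0 \<subseteq> \<tau>" using CR unfolding cone_rays_def R_def by blast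
    have mr: "\<rho> \<in> C \<Longrightarrow> (\<rho> \<subseteq> \<tau> \<longrightarrow> m \<bullet> ray_gen \<rho> = - a \<rho>) \<and> (\<not> \<rho> \<subseteq> \<tau> \<longrightarrow> m \<bullet> ray_gen \<rho> > - a \<rho>)" for \<rho>
      using m CR unfolding R_def by blast
    have le: "\<forall>\<rho>\<in>C. - (m \<bullet> ray_gen \<rho>) \<le> a \<rho>"
    proof
      fix \<rho> assume "\<rho> \<in> C"
      from mr[OF this] show "- (m \<bullet> ray_gen \<rho>) \<le> a \<rho>" by (cases "\<rho> \<subseteq> \<tau>") auto
    qed
    have lt: "\<exists>\<rho>\<in>C. - (m \<bullet> ray_gen \<rho>) < a \<rho>" proof -
      have "- (m \<bullet> ray_gen \<rho>0) < a \<rho>0" using mr[OF r0(1)] r0(2) by linarith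
      then show ?thesis using r0(1) by blast
    qed
    have "(\<Sum>\<rho>\<in>C. - (m \<bullet> ray_gen \<rho>)) < (\<Sum>\<rho>\<in>C. a \<rho>)"
      by (rule sum_strict_mono_ex1[OF finC le lt])
    moreover have "(\<Sum>\<rho>\<in>C. - (m \<bullet> ray_gen \<rho>)) = - (m \<bullet> w)"
      unfolding w_def by (simp add: inner_sum_right sum_negf)
    ultimately show ?thesis by simp
  qed
  have "chi_pair \<Sigma> a l = (\<Sum>\<rho>\<in>R. a \<rho> * coef \<rho>) - (\<Sum>\<rho>\<in>R. (if \<rho> \<in> C then a \<rho> else 0))"
  proof -
    have "chi_pair \<Sigma> a l = (\<Sum>\<rho>\<in>R. a \<rho> * coef \<rho> - (if \<rho> \<in> C then a \<rho> else 0))"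
      unfolding chi_pair_def R_def[symmetric] by (rule sum.cong) (auto simp: l_def right_diff_distrib)
    then show ?thesis by (simp only: sum_subtractf)
  qed
  also have "(\<Sum>\<rho>\<in>R. (if \<rho> \<in> C then a \<rho> else 0)) = (\<Sum>\<rho>\<in>C. a \<rho>)"
    using sum.inter_restrict[OF finR, of a C] CR by (simp add: Int_absorb1)
  finally have "chi_pair \<Sigma> a l < 0" using A1 A2 by simp
  then show ?thesis using lK by blast
qed

theorem theorem5p5:
  fixes \<Sigma> :: "(real^'n) set set"
    and x :: "(real^'n) set \<Rightarrow> complex"
    and a :: "(real^'n) set \<Rightarrow> real"
  assumes "projective_fan \<Sigma>"
    and "x \<in> unstable_locus \<Sigma>"
    and "ample_divisor \<Sigma> a"
  shows "(\<exists>!l. l \<in> Lambda \<Sigma> a x \<and> adapted \<Sigma> a x l) \<and>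
         (\<forall>l. l \<in> Lambda \<Sigma> a x \<and> adapted \<Sigma> a x l \<longrightarrow> M_fun \<Sigma> a x = - nrm \<Sigma> l)"
proof -
  have "finite \<Sigma>" using assms(1) unfolding projective_fan_def complete_fan_def is_fan_def by auto
  moreover have "rays \<Sigma> \<subseteq> \<Sigma>" unfolding rays_def by auto
  ultimately have fin: "finite (rays \<Sigma>)" using finite_subset by blast
  show ?thesis by (rule main_C[OF fin exists_neg[OF assms]])
qed

end
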